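(* There exists a robust constrained Markov decision process $\mathcal{M}=(\mathcal{S},\mathcal{A},\mathcal{P},\{r_i\}_{i=0}^{I},\{d_i\}_{i=1}^{I},\gamma)$ whose duality gap $$\mathscr{D}=\Big[\max_{\pi}\min_{\lambda\ge 0}\mathcal{L}(\pi,\lambda)\Big]-\Big[\min_{\lambda\ge 0}\max_{\pi}\mathcal{L}(\pi,\lambda)\Big]$$ is strictly positive.
   Context: A robust constrained MDP is a tuple $(\mathcal{S},\mathcal{A},\mathcal{P},\{r_i\}_{i=0}^{I},\{d_i\}_{i=1}^{I},\gamma)$ with finite state space $\mathcal{S}$, finite action space $\mathcal{A}$, an uncertainty set $\mathcal{P}$ of transition kernels $P(\cdot\mid s,a)\in\Delta(\mathcal{S})$, reward functions $r_i:\mathcal{S}\times\mathcal{A}\to\mathbb{R}$ ($r_0$ is the objective reward, $r_1,\dots,r_I$ are constraint rewards), thresholds $d_i\in\mathbb{R}$, discount factor $\gamma\in[0,1)$, and a fixed initial state distribution $\mu$. Policies are stationary randomized maps $\pi:\mathcal{S}\to\Delta(\mathcal{A})$. The robust value of $r_i$ is $V_i^\pi(s)=\inf_{P\in\mathcal{P}}\mathbb{E}_{\pi,P}\big[\sum_{t\ge0}\gamma^t r_i(s_t,a_t)\mid s_0=s\big]$ and $V_i^\pi(\mu)=\mathbb{E}_{s\sim\mu}[V_i^\pi(s)]$. The problem is $\max_\pi V_0^\pi(\mu)$ subject to $V_i^\pi(\mu)\ge d_i$ for $i=1,\dots,I$, with Lagrangian $\mathcal{L}(\pi,\lambda)=V_0^\pi(\mu)-\sum_{i=1}^I\lambda_i\big(d_i-V_i^\pi(\mu)\big)$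 for $\lambda=(\lambda_1,\dots,\lambda_I)\ge0$; the max is over all stationary randomized policies. *)

theory Defs
  imports Complex_Main "HOL-Library.Extended_Real"
begin

text \<open>States are {..<nS}, actions are {..<nA} (any finite state/action space is,
up to renaming, of this form).  A transition kernel is P s a s', a stationary randomized
policy is pol s a, rewards are r i s a (i = 0 objective, i = 1..I constraints).\<close>

definition is_kernel :: "nat \<Rightarrow> nat \<Rightarrow> (nat \<Rightarrow> nat \<Rightarrow> nat \<Rightarrow> real) \<Rightarrow> bool" where
  "is_kernel nS nA P \<longleftrightarrow>
     (\<forall>s<nS. \<forall>a<nA. (\<forall>s'<nS. 0 \<le> P s a s') \<and> (\<Sum>s'<nS. P s a s') = 1)"

definition is_policy :: "nat \<Rightarrow> nat \<Rightarrow> (nat \<Rightarrow> nat \<Rightarrow> real) \<Rightarrow> bool" where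
  "is_policy nS nA pol \<longleftrightarrow>
     (\<forall>s<nS. (\<forall>a<nA. 0 \<le> pol s a) \<and> (\<Sum>a<nA. pol s a) = 1)"

definition is_distr :: "nat \<Rightarrow> (nat \<Rightarrow> real) \<Rightarrow> bool" where
  "is_distr nS mu \<longleftrightarrow> (\<forall>s<nS. 0 \<le> mu s) \<and> (\<Sum>s<nS. mu s) = 1"

fun state_dist :: "nat \<Rightarrow> nat \<Rightarrow> (nat \<Rightarrow> nat \<Rightarrow> nat \<Rightarrow> real) \<Rightarrow> (nat \<Rightarrow> nat \<Rightarrow> real)
                    \<Rightarrow> nat \<Rightarrow> nat \<Rightarrow> nat \<Rightarrow> real" where
  "state_dist nS nA P pol s0 0 s = (if s = s0 then 1 else 0)"
| "state_dist nS nA P pol s0 (Suc t) s' =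
     (\<Sum>s<nS. \<Sum>a<nA. state_dist nS nA P pol s0 t s * pol s a * P s a s')"

text \<open>Expected discounted return E_{pol,P}[sum_t gamma^t r(s_t,a_t) | s_0 = s0]
 (by linearity of expectation, computed through the marginals of (s_t,a_t)).\<close>
definition disc_return :: "nat \<Rightarrow> nat \<Rightarrow> real \<Rightarrow> (nat \<Rightarrow> nat \<Rightarrow> nat \<Rightarrow> real)
     \<Rightarrow> (nat \<Rightarrow> nat \<Rightarrow> real) \<Rightarrow> (nat \<Rightarrow> nat \<Rightarrow> real) \<Rightarrow> nat \<Rightarrow> real" where
  "disc_return nS nA \<gamma> P pol r s0 =
     (\<Sum>t. \<gamma> ^ t * (\<Sum>s<nS. \<Sum>a<nA. state_dist nS nA P pol s0 t s * pol s a * r s a))"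

definition robust_value :: "nat \<Rightarrow> nat \<Rightarrow> real \<Rightarrow> (nat \<Rightarrow> nat \<Rightarrow> nat \<Rightarrow> real) set
     \<Rightarrow> (nat \<Rightarrow> nat \<Rightarrow> real) \<Rightarrow> (nat \<Rightarrow> nat \<Rightarrow> real) \<Rightarrow> nat \<Rightarrow> real" where
  "robust_value nS nA \<gamma> \<P> pol r s = (INF P\<in>\<P>. disc_return nS nA \<gamma> P pol r s)"

definition robust_value_mu :: "nat \<Rightarrow> nat \<Rightarrow> real \<Rightarrow> (nat \<Rightarrow> nat \<Rightarrow> nat \<Rightarrow> real) set
     \<Rightarrow> (nat \<Rightarrow> real) \<Rightarrow> (nat \<Rightarrow> nat \<Rightarrow> real) \<Rightarrow> (nat \<Rightarrow> nat \<Rightarrow> real) \<Rightarrow> real" where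
  "robust_value_mu nS nA \<gamma> \<P> mu pol r = (\<Sum>s<nS. mu s * robust_value nS nA \<gamma> \<P> pol r s)"

definition robust_cmdp :: "nat \<Rightarrow> nat \<Rightarrow> (nat \<Rightarrow> nat \<Rightarrow> nat \<Rightarrow> real) set \<Rightarrow> real
     \<Rightarrow> (nat \<Rightarrow> real) \<Rightarrow> bool" where
  "robust_cmdp nS nA \<P> \<gamma> mu \<longleftrightarrow>
     0 < nS \<and> 0 < nA \<and> \<P> \<noteq> {} \<and> (\<forall>P\<in>\<P>. is_kernel nS nA P) \<and>
     0 \<le> \<gamma> \<and> \<gamma> < 1 \<and> is_distr nS mu"

definition lagrangian :: "nat \<Rightarrow> nat \<Rightarrow> (nat \<Rightarrow> nat \<Rightarrow> nat \<Rightarrow> real) set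
     \<Rightarrow> (nat \<Rightarrow> nat \<Rightarrow> nat \<Rightarrow> real) \<Rightarrow> nat \<Rightarrow> (nat \<Rightarrow> real) \<Rightarrow> real \<Rightarrow> (nat \<Rightarrow> real)
     \<Rightarrow> (nat \<Rightarrow> nat \<Rightarrow> real) \<Rightarrow> (nat \<Rightarrow> real) \<Rightarrow> real" where
  "lagrangian nS nA \<P> r I d \<gamma> mu pol lam =
     robust_value_mu nS nA \<gamma> \<P> mu pol (r 0)
     - (\<Sum>i=1..I. lam i * (d i - robust_value_mu nS nA \<gamma> \<P> mu pol (r i)))"

text \<open>Primal (max-min) and dual (min-max) values, in the extended reals
 (the inner infimum is -infinity for infeasible policies).\<close>
definition maxmin_value where
  "maxmin_value nS nA \<P> r I d \<gamma> mu =
     (SUP pol\<in>{pol. is_policy nS nA pol}. INF lam\<in>{lam. \<forall>i\<in>{1..I}. 0 \<le> lam i}.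
        ereal (lagrangian nS nA \<P> r I d \<gamma> mu pol lam))"

definition minmax_value where
  "minmax_value nS nA \<P> r I d \<gamma> mu =
     (INF lam\<in>{lam. \<forall>i\<in>{1..I}. 0 \<le> lam i}. SUP pol\<in>{pol. is_policy nS nA pol}.
        ereal (lagrangian nS nA \<P> r I d \<gamma> mu pol lam))"

end

theory Submission
  imports Defs
begin

definition PA :: "nat \<Rightarrow> nat \<Rightarrow> nat \<Rightarrow> real" where
  "PA s a s' = (if s = 0 then (if a = 0 then (if s' = 1 then 1 else 0) else (if s' = 2 then 1 else 0))
                else (if s' = 4 then 1 else 0))"

definition PB :: "nat \<Rightarrow> nat \<Rightarrow> nat \<Rightarrow> real" where
  "PB s a s' = (if s = 0 then (if a = 0 then (if s' = 3 then 1 else 0) else (if s' = 1 then 1 else 0))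
                else (if s' = 4 then 1 else 0))"

definition rr :: "nat \<Rightarrow> nat \<Rightarrow> nat \<Rightarrow> real" where
  "rr i s a = (if i = 0 then (if (s = 1 \<and> a = 0) \<or> s = 3 then 1 else 0)
               else (if (s = 1 \<and> a = 1) \<or> s = 2 then 1 else 0))"

lemma sd1:
  "state_dist 5 2 P pol 0 (Suc 0) s' = (\<Sum>b<2. pol 0 b * P 0 b s')"
  by (simp add: numeral_eq_Suc lessThan_Suc)

lemma sd_Suc0:
  assumes "\<And>a s. P s a 0 = 0"
  shows "state_dist 5 2 P pol 0 (Suc t) 0 = 0"
  by (simp add: assms)

lemma sd_SS:
  assumes "\<And>a s. P s a 0 = 0" and "\<And>a s s'. s \<noteq> 0 \<Longrightarrow> s' < 4 \<Longrightarrow> P s a s' = 0"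
    and "s' < 4"
  shows "state_dist 5 2 P pol 0 (Suc (Suc t)) s' = 0"
proof -
  have "state_dist 5 2 P pol 0 (Suc (Suc t)) s' =
     (\<Sum>s<5. \<Sum>a<2. state_dist 5 2 P pol 0 (Suc t) s * pol s a * P s a s')" by simp
  also have "\<dots> = 0"
  proof (rule sum.neutral, intro ballI)
    fix s assume "s \<in> {..<(5::nat)}"
    show "(\<Sum>a<2. state_dist 5 2 P pol 0 (Suc t) s * pol s a * P s a s') = 0"
    proof (cases "s = 0")
      case True then show ?thesis using sd_Suc0[of P pol t, OF assms(1)] by simp
    next
      case False then show ?thesis using assms(2)[OF False assms(3)] by simp
    qed
  qed
  finally show ?thesis .
qed

declare state_dist.simps[simp del]

lemma disc_eq:
  assumes "\<And>a s. P s a 0 = 0" and "\<And>a s s'. s \<noteq> 0 \<Longrightarrow> s' < 4 \<Longrightarrow> P s a s' = 0"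
    and "\<And>a. r 4 a = 0"
  shows "disc_return 5 2 \<gamma> P pol r 0 =
     (\<Sum>a<2. pol 0 a * r 0 a) + \<gamma> * (\<Sum>s<5. \<Sum>a<2. (\<Sum>b<2. pol 0 b * P 0 b s) * pol s a * r s a)"
proof -
  let ?f = "\<lambda>t. \<gamma> ^ t * (\<Sum>s<5. \<Sum>a<2. state_dist 5 2 P pol 0 t s * pol s a * r s a)"
  have z: "?f t = 0" if "t \<notin> {0, 1}" for t
  proof -
    have "t = Suc (Suc (t - 2))" using that by auto
    then obtain k where k: "t = Suc (Suc k)" by blast
    have "(\<Sum>s<5. \<Sum>a<2. state_dist 5 2 P pol 0 t s * pol s a * r s a) = 0"
    proof (rule sum.neutral, intro ballI)
      fix s assume s: "s \<in> {..<(5::nat)}"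
      show "(\<Sum>a<2. state_dist 5 2 P pol 0 t s * pol s a * r s a) = 0"
      proof (cases "s < 4")
        case True then show ?thesis using sd_SS[of P s pol k, OF assms(1,2) True] k by (simp del: state_dist.simps)
      next
        case False then have "s = 4" using s by auto
        then show ?thesis using assms(3) by (simp del: state_dist.simps)
      qed
    qed
    then show ?thesis by (simp del: state_dist.simps)
  qed
  have "disc_return 5 2 \<gamma> P pol r 0 = (\<Sum>t\<in>{0,1}. ?f t)"
    unfolding disc_return_def by (rule suminf_finite) (simp, use z in blast)
  also have "\<dots> = ?f 0 + ?f 1" by simp
  also have "?f 0 = (\<Sum>a<2. pol 0 a * r 0 a)"
    by (simp add: eval_nat_numeral state_dist.simps)
  also have "?f 1 = \<gamma> * (\<Sum>s<5. \<Sum>a<2. (\<Sum>b<2. pol 0 b * P 0 b s) * pol s a * r s a)"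
  proof -
    have "state_dist 5 2 P pol 0 1 s = (\<Sum>b<2. pol 0 b * P 0 b s)" for s
      by (simp add: eval_nat_numeral state_dist.simps)
    then show ?thesis by simp
  qed
  finally show ?thesis .
qed


lemma PA_ok: "PA s a 0 = 0" "s \<noteq> 0 \<Longrightarrow> s' < 4 \<Longrightarrow> PA s a s' = 0"
  by (auto simp: PA_def)
lemma PB_ok: "PB s a 0 = 0" "s \<noteq> 0 \<Longrightarrow> s' < 4 \<Longrightarrow> PB s a s' = 0"
  by (auto simp: PB_def)
lemma rr_ok: "rr i 4 a = 0"
  by (auto simp: rr_def)

lemma dA0: "disc_return 5 2 g PA pol (rr 0) 0 = g * (pol 0 0 * pol 1 0)"
  by (subst disc_eq) (auto simp: PA_ok rr_ok eval_nat_numeral PA_def rr_def)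
lemma dB0: "disc_return 5 2 g PB pol (rr 0) 0 = g * (pol 0 1 * pol 1 0 + pol 0 0 * (pol 3 0 + pol 3 1))"
  by (subst disc_eq) (auto simp: PB_ok rr_ok eval_nat_numeral PB_def rr_def algebra_simps)
lemma dA1: "disc_return 5 2 g PA pol (rr 1) 0 = g * (pol 0 0 * pol 1 1 + pol 0 1 * (pol 2 0 + pol 2 1))"
  by (subst disc_eq) (auto simp: PA_ok rr_ok eval_nat_numeral PA_def rr_def algebra_simps)
lemma dB1: "disc_return 5 2 g PB pol (rr 1) 0 = g * (pol 0 1 * pol 1 1)"
  by (subst disc_eq) (auto simp: PB_ok rr_ok eval_nat_numeral PB_def rr_def)


definition mu0 :: "nat \<Rightarrow> real" where "mu0 s = (if s = 0 then 1 else 0)"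

lemma pol_facts:
  assumes "is_policy 5 2 pol"
  shows "pol 0 1 = 1 - pol 0 0" "pol 1 1 = 1 - pol 1 0" "pol 2 0 + pol 2 1 = 1" "pol 3 0 + pol 3 1 = 1"
    "0 \<le> pol 0 0" "pol 0 0 \<le> 1" "0 \<le> pol 1 0" "pol 1 0 \<le> 1"
proof -
  have h: "\<And>s. s < 5 \<Longrightarrow> pol s 0 + pol s 1 = 1 \<and> 0 \<le> pol s 0 \<and> 0 \<le> pol s 1"
    using assms unfolding is_policy_def by (auto simp: eval_nat_numeral)
  from h[of 0] h[of 1] h[of 2] h[of 3]
  show "pol 0 1 = 1 - pol 0 0" "pol 1 1 = 1 - pol 1 0" "pol 2 0 + pol 2 1 = 1" "pol 3 0 + pol 3 1 = 1"
    "0 \<le> pol 0 0" "pol 0 0 \<le> 1" "0 \<le> pol 1 0" "pol 1 0 \<le> 1" by auto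
qed

lemma rv_mu: "robust_value_mu 5 2 g P mu0 pol r = robust_value 5 2 g P pol r 0"
  unfolding robust_value_mu_def mu0_def by (simp add: eval_nat_numeral)

lemma ineq1: "0 \<le> (x::real) \<Longrightarrow> x \<le> 1 \<Longrightarrow> 0 \<le> y \<Longrightarrow> y \<le> 1 \<Longrightarrow> x * y \<le> (1 - x) * y + x"
proof -
  assume a: "0 \<le> x" "x \<le> 1" "0 \<le> y" "y \<le> 1"
  have "x * y \<le> x * 1" using a by (intro mult_left_mono) auto
  moreover have "0 \<le> (1 - x) * y" using a by auto
  ultimately show ?thesis by simp
qed

lemma inf2: "Inf {a, b::real} = min a b"
  by (subst cInf_insert) (auto simp: inf_min)

lemma V0: assumes "is_policy 5 2 pol" "0 \<le> g"
  shows "robust_value_mu 5 2 g {PA, PB} mu0 pol (rr 0) = g * (pol 0 0 * pol 1 0)"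
proof -
  note f = pol_facts[OF assms(1)]
  have "pol 0 0 * pol 1 0 \<le> pol 0 1 * pol 1 0 + pol 0 0 * (pol 3 0 + pol 3 1)"
    using f ineq1[of "pol 0 0" "pol 1 0"] by simp
  then have "g * (pol 0 0 * pol 1 0) \<le> g * (pol 0 1 * pol 1 0 + pol 0 0 * (pol 3 0 + pol 3 1))"
    using assms(2) by (rule mult_left_mono)
  then show ?thesis unfolding rv_mu robust_value_def
    by (simp only: image_insert image_empty inf2 dA0 dB0 min_absorb1)
qed

lemma V1: assumes "is_policy 5 2 pol" "0 \<le> g"
  shows "robust_value_mu 5 2 g {PA, PB} mu0 pol (rr 1) = g * ((1 - pol 0 0) * (1 - pol 1 0))"
proof -
  note f = pol_facts[OF assms(1)]
  have "pol 0 1 * pol 1 1 \<le> pol 0 0 * pol 1 1 + pol 0 1 * (pol 2 0 + pol 2 1)"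
    using f ineq1[of "1 - pol 0 0" "1 - pol 1 0"] by simp
  then have "g * (pol 0 1 * pol 1 1) \<le> g * (pol 0 0 * pol 1 1 + pol 0 1 * (pol 2 0 + pol 2 1))"
    using assms(2) by (rule mult_left_mono)
  then have "min (g * (pol 0 0 * pol 1 1 + pol 0 1 * (pol 2 0 + pol 2 1))) (g * (pol 0 1 * pol 1 1))
     = g * ((1 - pol 0 0) * (1 - pol 1 0))" using f by (simp add: min_absorb2)
  then show ?thesis unfolding rv_mu robust_value_def
    by (simp only: image_insert image_empty inf2 dA1 dB1)
qed

lemma Lag: assumes "is_policy 5 2 pol"
  shows "lagrangian 5 2 {PA, PB} rr 1 (\<lambda>_. 1/8) (1/2) mu0 pol lam =
    (1/2) * (pol 0 0 * pol 1 0) - lam 1 * (1/8 - (1/2) * ((1 - pol 0 0) * (1 - pol 1 0)))"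
proof -
  have a: "robust_value_mu 5 2 (1/2) {PA, PB} mu0 pol (rr 0) = (1/2) * (pol 0 0 * pol 1 0)"
    using V0[OF assms, of "1/2"] by simp
  have b: "robust_value_mu 5 2 (1/2) {PA, PB} mu0 pol (rr 1) = (1/2) * ((1 - pol 0 0) * (1 - pol 1 0))"
    using V1[OF assms, of "1/2"] by simp
  have "lagrangian 5 2 {PA, PB} rr 1 (\<lambda>_. 1/8) (1/2) mu0 pol lam =
    robust_value_mu 5 2 (1/2) {PA, PB} mu0 pol (rr 0) - lam 1 * (1/8 - robust_value_mu 5 2 (1/2) {PA, PB} mu0 pol (rr 1))"
    unfolding lagrangian_def by simp
  then show ?thesis by (simp only: a b)
qed


lemma maxmin_le:
  "maxmin_value 5 2 {PA, PB} rr 1 (\<lambda>_. 1/8) (1/2) mu0 \<le> ereal (1/8)"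
  unfolding maxmin_value_def
proof (rule SUP_least)
  fix pol assume "pol \<in> {pol. is_policy 5 2 pol}"
  then have p: "is_policy 5 2 pol" by simp
  note f = pol_facts[OF p]
  define x where "x = pol 0 0"
  define y where "y = pol 1 0"
  have x: "0 \<le> x" "x \<le> 1" and y: "0 \<le> y" "y \<le> 1" using f unfolding x_def y_def by auto
  have L: "\<And>lam. lagrangian 5 2 {PA, PB} rr 1 (\<lambda>_. 1/8) (1/2) mu0 pol lam =
    (1/2) * (x * y) - lam 1 * (1/8 - (1/2) * ((1 - x) * (1 - y)))"
    using Lag[OF p] unfolding x_def y_def by simp
  show "(INF lam\<in>{lam. \<forall>i\<in>{1..1}. 0 \<le> lam i}.
          ereal (lagrangian 5 2 {PA, PB} rr 1 (\<lambda>_. 1/8) (1/2) mu0 pol lam)) \<le> ereal (1/8)"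
  proof (cases "(1 - x) * (1 - y) \<ge> 1/4")
    case True
    have "x * y \<le> 1/4"
    proof -
      have a1: "4 * (x * y) \<le> (x + y) * (x + y)"
        using sum_squares_ge_zero[of "x - y" 0] by (simp add: algebra_simps power2_eq_square)
      have a2: "4 * ((1 - x) * (1 - y)) \<le> (2 - (x + y)) * (2 - (x + y))"
        using sum_squares_ge_zero[of "x - y" 0] by (simp add: algebra_simps power2_eq_square)
      show ?thesis
      proof (cases "x + y \<le> 1")
        case True
        have "(x + y) * (x + y) \<le> 1 * 1" using True x y by (intro mult_mono) auto
        then show ?thesis using a1 by simp
      next
        case False
        have "(2 - (x + y)) * (2 - (x + y)) < 1 * 1" using False x y by (intro mult_strict_mono) auto
        then show ?thesis using a2 True by simp
      qed
    qed
    then have "ereal (lagrangian 5 2 {PA, PB} rr 1 (\<lambda>_. 1/8) (1/2) mu0 pol (\<lambda>_. 0)) \<le> ereal (1/8)"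
      unfolding L by simp
    moreover have "(\<lambda>_. 0) \<in> {lam::nat\<Rightarrow>real. \<forall>i\<in>{1..1}. 0 \<le> lam i}" by simp
    ultimately show ?thesis by (rule INF_lower2[rotated])
  next
    case False
    define D where "D = 1/8 - (1/2) * ((1 - x) * (1 - y))"
    have D: "D > 0" using False unfolding D_def by simp
    have "x * y \<le> 1" using x y by (simp add: mult_le_one)
    have e: "1 / (2 * D) * D = 1/2" using D by (simp add: field_simps)
    have "lagrangian 5 2 {PA, PB} rr 1 (\<lambda>_. 1/8) (1/2) mu0 pol (\<lambda>_. 1 / (2 * D)) = (1/2) * (x * y) - 1/2"
      unfolding L D_def[symmetric] e by simp
    then have "ereal (lagrangian 5 2 {PA, PB} rr 1 (\<lambda>_. 1/8) (1/2) mu0 pol (\<lambda>_. 1 / (2 * D))) \<le> ereal (1/8)"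
      using \<open>x * y \<le> 1\<close> by simp
    moreover have "(\<lambda>_. 1 / (2 * D)) \<in> {lam::nat\<Rightarrow>real. \<forall>i\<in>{1..1}. 0 \<le> lam i}" using D by simp
    ultimately show ?thesis by (rule INF_lower2[rotated])
  qed
qed


lemma minmax_ge:
  "ereal (3/8) \<le> minmax_value 5 2 {PA, PB} rr 1 (\<lambda>_. 1/8) (1/2) mu0"
  unfolding minmax_value_def
proof (rule INF_greatest)
  fix lam :: "nat \<Rightarrow> real" assume "lam \<in> {lam. \<forall>i\<in>{1..1}. 0 \<le> lam i}"
  then have l: "0 \<le> lam 1" by simp
  define p1 :: "nat \<Rightarrow> nat \<Rightarrow> real" where "p1 = (\<lambda>s a. if a = 0 then 1 else 0)"
  define p2 :: "nat \<Rightarrow> nat \<Rightarrow> real" where "p2 = (\<lambda>s a. if a = 0 then 0 else 1)"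
  have P1: "is_policy 5 2 p1" unfolding is_policy_def p1_def by (simp add: eval_nat_numeral)
  have P2: "is_policy 5 2 p2" unfolding is_policy_def p2_def by (simp add: eval_nat_numeral)
  have L1: "lagrangian 5 2 {PA, PB} rr 1 (\<lambda>_. 1/8) (1/2) mu0 p1 lam = 1/2 - lam 1 * (1/8)"
    using Lag[OF P1, of lam] unfolding p1_def by simp
  have L2: "lagrangian 5 2 {PA, PB} rr 1 (\<lambda>_. 1/8) (1/2) mu0 p2 lam = lam 1 * (3/8)"
    using Lag[OF P2, of lam] unfolding p2_def by simp
  show "ereal (3/8) \<le> (SUP pol\<in>{pol. is_policy 5 2 pol}.
          ereal (lagrangian 5 2 {PA, PB} rr 1 (\<lambda>_. 1/8) (1/2) mu0 pol lam))"
  proof (cases "lam 1 \<le> 1")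
    case True
    then have "ereal (3/8) \<le> ereal (lagrangian 5 2 {PA, PB} rr 1 (\<lambda>_. 1/8) (1/2) mu0 p1 lam)"
      unfolding L1 by simp
    moreover have "p1 \<in> {pol. is_policy 5 2 pol}" using P1 by simp
    ultimately show ?thesis by (rule SUP_upper2[rotated])
  next
    case False
    then have "ereal (3/8) \<le> ereal (lagrangian 5 2 {PA, PB} rr 1 (\<lambda>_. 1/8) (1/2) mu0 p2 lam)"
      unfolding L2 by simp
    moreover have "p2 \<in> {pol. is_policy 5 2 pol}" using P2 by simp
    ultimately show ?thesis by (rule SUP_upper2[rotated])
  qed
qed

lemma kernels: "is_kernel 5 2 PA" "is_kernel 5 2 PB"
  unfolding is_kernel_def PA_def PB_def by (auto simp: eval_nat_numeral)

theorem theorem1: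
  shows "\<exists>(nS::nat) (nA::nat) (\<P>::(nat \<Rightarrow> nat \<Rightarrow> nat \<Rightarrow> real) set)
           (r::nat \<Rightarrow> nat \<Rightarrow> nat \<Rightarrow> real) (I::nat) (d::nat \<Rightarrow> real) (\<gamma>::real) (mu::nat \<Rightarrow> real).
           robust_cmdp nS nA \<P> \<gamma> mu \<and>
           maxmin_value nS nA \<P> r I d \<gamma> mu < minmax_value nS nA \<P> r I d \<gamma> mu"
proof (intro exI conjI)
  show "robust_cmdp 5 2 {PA, PB} (1/2) mu0"
    unfolding robust_cmdp_def is_distr_def mu0_def using kernels by (simp add: eval_nat_numeral)
  have "maxmin_value 5 2 {PA, PB} rr 1 (\<lambda>_. 1/8) (1/2) mu0 \<le> ereal (1/8)" by (rule maxmin_le)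
  also have "\<dots> < ereal (3/8)" by simp
  also have "\<dots> \<le> minmax_value 5 2 {PA, PB} rr 1 (\<lambda>_. 1/8) (1/2) mu0" by (rule minmax_ge)
  finally show "maxmin_value 5 2 {PA, PB} rr 1 (\<lambda>_. 1/8) (1/2) mu0
      < minmax_value 5 2 {PA, PB} rr 1 (\<lambda>_. 1/8) (1/2) mu0" .
qed

end
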